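(* Let $1<w\le 2$, $h>1$, $k\ge 2$, and let $\frac12\le y_1<\dots<y_n\le h-\frac12$ be uniformly spaced with $y_{i+1}-y_i=\frac1k$ for all $i$. Let $(\mathbf x,\prec)$ be a $\frac1k$-reasonable layout of this instance and let $a\in\mathbb R$. Then there are at most $2(\log_2 k+1)$ standard bad squares $s_i$ with $y_i\in[a,a+1]$.
   Context: The instance is the strip $T=[0,w]\times[0,h]$ with the given $y_i$. A layout is a pair $(\mathbf x,\prec)$ where $\mathbf x=(x_1,\dots,x_n)$ with $x_i\in[\frac12,w-\frac12]$, and $\prec$ is a total order on the squares $s_1,\dots,s_n$, where $s_i$ is the closed axis-parallel unit square with centre $(x_i,y_i)$. If $s_i\prec s_j$ we say $s_j$ is in front of $s_i$ and $s_i$ is behind $s_j$. A point $p$ on the boundary of $s_i$ is visible if every square $s_j$ ($j\neq i$) containing $p$ is behind $s_i$, and covered otherwise. The visible perimeter of $s_i$ is the total length of its visible boundary points; the gap of $s_i$ is its visible perimeter minus $2$, the gap of a layout is the minimum gap of its squares, and a layout is $\varepsilon$-reasonable if its gap is larger than $\varepsilon$. A bad square is a square with at least two of its four corners covered; a standard bad square is a bad square one of whose vertical sides is entirely covered. *)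

theory Defs
  imports "HOL-Analysis.Analysis"
begin

text \<open>Squares are indexed by 0..<n. Square i is the closed axis-parallel unit
square with centre (x i, y i).\<close>

definition sq :: "(nat \<Rightarrow> real) \<Rightarrow> (nat \<Rightarrow> real) \<Rightarrow> nat \<Rightarrow> (real \<times> real) set" where
  "sq x y i = {p. \<bar>fst p - x i\<bar> \<le> 1/2 \<and> \<bar>snd p - y i\<bar> \<le> 1/2}"

text \<open>A layout: positions x i in [1/2, w - 1/2] and a strict total order prec
on the squares ("prec i j" means s_i is behind s_j).\<close>

definition is_layout :: "real \<Rightarrow> nat \<Rightarrow> (nat \<Rightarrow> real) \<Rightarrow> (nat \<Rightarrow> nat \<Rightarrow> bool) \<Rightarrow> bool" where
  "is_layout w n x prec \<longleftrightarrow>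
     (\<forall>i<n. 1/2 \<le> x i \<and> x i \<le> w - 1/2) \<and>
     (\<forall>i<n. \<not> prec i i) \<and>
     (\<forall>i<n. \<forall>j<n. \<forall>l<n. prec i j \<and> prec j l \<longrightarrow> prec i l) \<and>
     (\<forall>i<n. \<forall>j<n. i \<noteq> j \<longrightarrow> prec i j \<or> prec j i)"

definition visible :: "nat \<Rightarrow> (nat \<Rightarrow> real) \<Rightarrow> (nat \<Rightarrow> real) \<Rightarrow> (nat \<Rightarrow> nat \<Rightarrow> bool)
    \<Rightarrow> nat \<Rightarrow> real \<times> real \<Rightarrow> bool" where
  "visible n x y prec i p \<longleftrightarrow> (\<forall>j<n. j \<noteq> i \<and> p \<in> sq x y j \<longrightarrow> prec j i)"

definition left_side :: "(nat \<Rightarrow> real) \<Rightarrow> (nat \<Rightarrow> real) \<Rightarrow> nat \<Rightarrow> real \<Rightarrow> real \<times> real" where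
  "left_side x y i t = (x i - 1/2, y i + t)"
definition right_side :: "(nat \<Rightarrow> real) \<Rightarrow> (nat \<Rightarrow> real) \<Rightarrow> nat \<Rightarrow> real \<Rightarrow> real \<times> real" where
  "right_side x y i t = (x i + 1/2, y i + t)"
definition bottom_side :: "(nat \<Rightarrow> real) \<Rightarrow> (nat \<Rightarrow> real) \<Rightarrow> nat \<Rightarrow> real \<Rightarrow> real \<times> real" where
  "bottom_side x y i t = (x i + t, y i - 1/2)"
definition top_side :: "(nat \<Rightarrow> real) \<Rightarrow> (nat \<Rightarrow> real) \<Rightarrow> nat \<Rightarrow> real \<Rightarrow> real \<times> real" where
  "top_side x y i t = (x i + t, y i + 1/2)"

text \<open>Visible perimeter: total length of the visible boundary points, i.e. the
sum over the four sides of the 1-dimensional Lebesgue measure of the visible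
parameter values (corners have measure zero, so double counting is harmless).\<close>

definition vis_perimeter :: "nat \<Rightarrow> (nat \<Rightarrow> real) \<Rightarrow> (nat \<Rightarrow> real) \<Rightarrow> (nat \<Rightarrow> nat \<Rightarrow> bool)
    \<Rightarrow> nat \<Rightarrow> real" where
  "vis_perimeter n x y prec i =
     measure lebesgue {t \<in> {-1/2..1/2}. visible n x y prec i (left_side x y i t)} +
     measure lebesgue {t \<in> {-1/2..1/2}. visible n x y prec i (right_side x y i t)} +
     measure lebesgue {t \<in> {-1/2..1/2}. visible n x y prec i (bottom_side x y i t)} +
     measure lebesgue {t \<in> {-1/2..1/2}. visible n x y prec i (top_side x y i t)}"

definition gap :: "nat \<Rightarrow> (nat \<Rightarrow> real) \<Rightarrow> (nat \<Rightarrow> real) \<Rightarrow> (nat \<Rightarrow> nat \<Rightarrow> bool) \<Rightarrow> nat \<Rightarrow> real" where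
  "gap n x y prec i = vis_perimeter n x y prec i - 2"

definition reasonable :: "real \<Rightarrow> nat \<Rightarrow> (nat \<Rightarrow> real) \<Rightarrow> (nat \<Rightarrow> real) \<Rightarrow> (nat \<Rightarrow> nat \<Rightarrow> bool) \<Rightarrow> bool" where
  "reasonable eps n x y prec \<longleftrightarrow> (\<forall>i<n. gap n x y prec i > eps)"

definition corners :: "(nat \<Rightarrow> real) \<Rightarrow> (nat \<Rightarrow> real) \<Rightarrow> nat \<Rightarrow> (real \<times> real) set" where
  "corners x y i = {(x i - 1/2, y i - 1/2), (x i + 1/2, y i - 1/2),
                    (x i - 1/2, y i + 1/2), (x i + 1/2, y i + 1/2)}"

definition bad_square :: "nat \<Rightarrow> (nat \<Rightarrow> real) \<Rightarrow> (nat \<Rightarrow> real) \<Rightarrow> (nat \<Rightarrow> nat \<Rightarrow> bool) \<Rightarrow> nat \<Rightarrow> bool" where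
  "bad_square n x y prec i \<longleftrightarrow> card {c \<in> corners x y i. \<not> visible n x y prec i c} \<ge> 2"

definition standard_bad_square :: "nat \<Rightarrow> (nat \<Rightarrow> real) \<Rightarrow> (nat \<Rightarrow> real) \<Rightarrow> (nat \<Rightarrow> nat \<Rightarrow> bool) \<Rightarrow> nat \<Rightarrow> bool" where
  "standard_bad_square n x y prec i \<longleftrightarrow>
     bad_square n x y prec i \<and>
     ((\<forall>t\<in>{-1/2..1/2}. \<not> visible n x y prec i (left_side x y i t)) \<or>
      (\<forall>t\<in>{-1/2..1/2}. \<not> visible n x y prec i (right_side x y i t)))"

end

theory Submission
  imports Defs
begin
lemma meas_ge:
  fixes c0 :: real
  assumes "\<And>t. t \<in> {-1/2..1/2} \<Longrightarrow> P t \<Longrightarrow> c0 \<le> t"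
  shows "measure lebesgue {t \<in> {-1/2..1/2}. P t} \<le> max 0 (1/2 - c0)"
proof (cases "{t \<in> {-1/2..1/2}. P t} \<in> sets lebesgue")
  case True
  have sub: "{t \<in> {-1/2..1/2}. P t} \<subseteq> {c0..1/2}" using assms by auto
  have "measure lebesgue {t \<in> {-1/2..1/2}. P t} \<le> measure lebesgue {c0..(1/2::real)}"
    by (rule measure_mono_fmeasurable[OF sub True]) simp
  also have "\<dots> \<le> max 0 (1/2 - c0)" by simp
  finally show ?thesis .
next
  case False
  then show ?thesis by (simp add: measure_notin_sets)
qed
lemma meas_le:
  fixes c1 :: real
  assumes "\<And>t. t \<in> {-1/2..1/2} \<Longrightarrow> P t \<Longrightarrow> t \<le> c1"
  shows "measure lebesgue {t \<in> {-1/2..1/2}. P t} \<le> max 0 (c1 + 1/2)"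
proof (cases "{t \<in> {-1/2..1/2}. P t} \<in> sets lebesgue")
  case True
  have sub: "{t \<in> {-1/2..1/2}. P t} \<subseteq> {-1/2..c1}" using assms by auto
  have "measure lebesgue {t \<in> {-1/2..1/2}. P t} \<le> measure lebesgue {-1/2..c1}"
    by (rule measure_mono_fmeasurable[OF sub True]) simp
  also have "\<dots> \<le> max 0 (c1 + 1/2)" by simp
  finally show ?thesis .
next
  case False
  then show ?thesis by (simp add: measure_notin_sets)
qed
lemma min_exists:
  assumes "finite A" "A \<noteq> {}" "A \<subseteq> S"
    and tr: "\<forall>i\<in>S. \<forall>j\<in>S. \<forall>l\<in>S. prec i j \<and> prec j l \<longrightarrow> prec i l"
    and tot: "\<forall>i\<in>S. \<forall>j\<in>S. i \<noteq> j \<longrightarrow> prec i j \<or> prec j i"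
  shows "\<exists>b\<in>A. \<forall>t\<in>A. t \<noteq> b \<longrightarrow> prec b t"
  using assms(1,2,3)
proof (induction A rule: finite_ne_induct)
  case (singleton x) then show ?case by auto
next
  case (insert x F)
  then obtain b where b: "b \<in> F" "\<forall>t\<in>F. t \<noteq> b \<longrightarrow> prec b t" by auto
  show ?case
  proof (cases "prec x b")
    case True
    then show ?thesis using b insert.prems tr by (metis insert_iff subsetD)
  next
    case False
    then have "prec b x" using tot insert.prems insert.hyps b by (metis insert_subset subsetD)
    then show ?thesis using b by auto
  qed
qed

lemma that_aux: "(c::real) - ds < Q \<Longrightarrow> c < 2 * di - ds \<Longrightarrow> c - di < Q / 2" by linarith

lemma chain:
  fixes S :: "nat set" and d :: "nat \<Rightarrow> real" and k :: real
  assumes fin: "finite S" and k1: "k \<ge> 1"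
    and irr: "\<forall>i\<in>S. \<not> prec i i"
    and tr: "\<forall>i\<in>S. \<forall>j\<in>S. \<forall>l\<in>S. prec i j \<and> prec j l \<longrightarrow> prec i l"
    and tot: "\<forall>i\<in>S. \<forall>j\<in>S. i \<noteq> j \<longrightarrow> prec i j \<or> prec j i"
    and d1: "\<forall>i\<in>S. d i \<le> 1"
    and base: "\<forall>i\<in>S. 1 + 1/k < 2 * d i"
    and step: "\<forall>i\<in>S. \<forall>s\<in>S. prec i s \<longrightarrow> 1 + 1/k < 2 * d i - d s"
  shows "real (card S) \<le> log 2 k + 1"
proof (cases "S = {}")
  case True
  then show ?thesis using k1 by simp
next
  case False
  define c where "c = 1 + 1/k"
  define fr where "fr i = {s\<in>S. prec i s}" for i
  have P: "\<forall>i\<in>S. m \<le> card (fr i) \<longrightarrow> c - d i < c / 2^(m+1)" for m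
  proof (induction m)
    case 0
    then show ?case using base by (auto simp: c_def)
  next
    case (Suc m)
    show ?case
    proof (intro ballI impI)
      fix i assume i: "i \<in> S" and cm: "Suc m \<le> card (fr i)"
      have finfr: "finite (fr i)" using fin by (simp add: fr_def)
      have ne: "fr i \<noteq> {}" using cm by auto
      obtain s where s: "s \<in> fr i" "\<forall>t\<in>fr i. t \<noteq> s \<longrightarrow> prec s t"
        using min_exists[OF finfr ne _ tr tot] by (auto simp: fr_def)
      have sS: "s \<in> S" and pis: "prec i s" using s by (auto simp: fr_def)
      have "fr i - {s} \<subseteq> fr s" using s by (auto simp: fr_def)
      then have "card (fr i - {s}) \<le> card (fr s)"
        by (intro card_mono) (auto simp: fr_def fin)
      moreover have "card (fr i - {s}) = card (fr i) - 1" using s(1) finfr by simp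
      ultimately have "m \<le> card (fr s)" using cm by simp
      then have "c - d s < c / 2^(m+1)" using Suc.IH sS by blast
      moreover have "c < 2 * d i - d s" using step i sS pis by (auto simp: c_def)
      ultimately have "c - d i < (c / 2^(m+1)) / 2"
        using that_aux[of c "d s" "c / 2^(m+1)" "d i"] by blast
      then show "c - d i < c / 2^(Suc m + 1)" by (simp add: field_simps)
    qed
  qed
  obtain b where b: "b \<in> S" "\<forall>t\<in>S. t \<noteq> b \<longrightarrow> prec b t"
    using min_exists[OF fin False _ tr tot] by auto
  have "S - {b} \<subseteq> fr b" using b by (auto simp: fr_def)
  then have "card (S - {b}) \<le> card (fr b)" by (intro card_mono) (auto simp: fr_def fin)
  moreover have "card (S - {b}) = card S - 1" using b fin by simp
  ultimately have "card S - 1 \<le> card (fr b)" by simp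
  then have "c - d b < c / 2^(card S - 1 + 1)" using P[of "card S - 1"] b(1) by blast
  moreover have "card S \<ge> 1" using False fin by (simp add: Suc_leI card_gt_0_iff)
  ultimately have "c - d b < c / 2^(card S)" by simp
  moreover have "1/k \<le> c - d b" using d1 b by (auto simp: c_def)
  ultimately have "1/k < (1 + 1/k) / 2^(card S)" by (simp add: c_def)
  then have "2^(card S) < k + 1" using k1 by (simp add: field_simps)
  then have "2^(card S) < 2 * k" using k1 by simp
  then have "(2::real)^(card S - 1) \<le> k" using \<open>card S \<ge> 1\<close>
  proof -
    have "(2::real)^(card S) = 2 * 2^(card S - 1)" using \<open>card S \<ge> 1\<close>
      by (metis Suc_diff_1 less_le_trans power_Suc zero_less_one)
    then show ?thesis using \<open>2^(card S) < 2 * k\<close> by simp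
  qed
  then have "log 2 (2^(card S - 1)) \<le> log 2 k" using k1 by (subst log_le_cancel_iff) auto
  then have "real (card S - 1) \<le> log 2 k" by (simp add: log_nat_power)
  then show ?thesis using \<open>card S \<ge> 1\<close> by simp
qed
lemma vis_not_in:
  assumes "visible n x y prec i p" "j < n" "j \<noteq> i" "\<not> prec j i"
  shows "p \<notin> sq x y j"
  using assms by (auto simp: visible_def)

lemma arith1: "(2::real) + e < A + B + C + D \<Longrightarrow> A = 0 \<Longrightarrow> B \<le> 1 \<Longrightarrow> C \<le> z \<Longrightarrow> D \<le> z \<Longrightarrow> 1 + e < 2*z"
  by linarith

lemma arith2: "(2::real) + e < A + B + C + D \<Longrightarrow> A = 0 \<Longrightarrow> B \<le> 1 \<Longrightarrow> C + D \<le> z + max 0 q \<Longrightarrow> z \<le> 1 \<Longrightarrow> 0 < e \<Longrightarrow> 1 + e < z + q"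
proof (cases "0 \<le> q")
  case True
  then have "max 0 q = q" by simp
  then show "2 + e < A + B + C + D \<Longrightarrow> A = 0 \<Longrightarrow> B \<le> 1 \<Longrightarrow> C + D \<le> z + max 0 q \<Longrightarrow> z \<le> 1 \<Longrightarrow> 0 < e \<Longrightarrow> 1 + e < z + q" by linarith
next
  case False
  then have "max 0 q = 0" by simp
  then show "2 + e < A + B + C + D \<Longrightarrow> A = 0 \<Longrightarrow> B \<le> 1 \<Longrightarrow> C + D \<le> z + max 0 q \<Longrightarrow> z \<le> 1 \<Longrightarrow> 0 < e \<Longrightarrow> 1 + e < z + q" by linarith
qed

lemma arith1r: "(2::real) + e < A + B + C + D \<Longrightarrow> A \<le> 1 \<Longrightarrow> B = 0 \<Longrightarrow> C \<le> z \<Longrightarrow> D \<le> z \<Longrightarrow> 1 + e < 2*z"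
  by linarith

lemma arith2r: "(2::real) + e < A + B + C + D \<Longrightarrow> A \<le> 1 \<Longrightarrow> B = 0 \<Longrightarrow> C + D \<le> z + max 0 q \<Longrightarrow> z \<le> 1 \<Longrightarrow> 0 < e \<Longrightarrow> 1 + e < z + q"
  using arith2[of e B A C D z q] by (simp add: add.commute add.left_commute)

lemma left_facts:
  fixes k :: real
  assumes lay: "is_layout w n x prec" and w: "1 < w" "w \<le> 2" and k: "k > 0"
    and g: "gap n x y prec i > 1/k" and i: "i < n"
    and L: "\<forall>t\<in>{-1/2..1/2}. \<not> visible n x y prec i (left_side x y i t)"
  shows "1 + 1/k < 2*(x i - 1/2)"
    and "\<And>s. s < n \<Longrightarrow> s \<noteq> i \<Longrightarrow> \<not> prec s i \<Longrightarrow> \<bar>y s - y i\<bar> \<le> 1 \<Longrightarrow>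
          1 + 1/k < 2*(x i - 1/2) - (x s - 1/2)"
proof -
  have xr: "\<forall>j<n. 1/2 \<le> x j \<and> x j \<le> w - 1/2" using lay by (simp add: is_layout_def)
  have xi: "1/2 \<le> x i" "x i \<le> w - 1/2" using xr i by auto
  obtain j where j: "j < n" "j \<noteq> i" "\<not> prec j i" "left_side x y i (-1/2) \<in> sq x y j"
    using L[rule_format, of "-1/2"] by (auto simp: visible_def)
  obtain j' where j': "j' < n" "j' \<noteq> i" "\<not> prec j' i" "left_side x y i (1/2) \<in> sq x y j'"
    using L[rule_format, of "1/2"] by (auto simp: visible_def)
  have jx: "\<bar>x i - 1/2 - x j\<bar> \<le> 1/2" "\<bar>y i - 1/2 - y j\<bar> \<le> 1/2"
    using j(4) by (auto simp: left_side_def sq_def)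
  have jx': "\<bar>x i - 1/2 - x j'\<bar> \<le> 1/2" "\<bar>y i + 1/2 - y j'\<bar> \<le> 1/2"
    using j'(4) by (auto simp: left_side_def sq_def)
  have xj: "1/2 \<le> x j" "1/2 \<le> x j'" using xr j j' by auto
  have mL: "measure lebesgue {t \<in> {-1/2..1/2}. visible n x y prec i (left_side x y i t)} = 0"
  proof -
    have "{t \<in> {-1/2..1/2}. visible n x y prec i (left_side x y i t)} = {}" using L by blast
    then show ?thesis by (metis measure_empty)
  qed
  have mR: "measure lebesgue {t \<in> {-1/2..1/2}. visible n x y prec i (right_side x y i t)} \<le> 1"
    using meas_ge[of "\<lambda>t. visible n x y prec i (right_side x y i t)" "-1/2"] by simp
  have mB: "measure lebesgue {t \<in> {-1/2..1/2}. visible n x y prec i (bottom_side x y i t)} \<le> x i - 1/2"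
  proof -
    have "measure lebesgue {t \<in> {-1/2..1/2}. visible n x y prec i (bottom_side x y i t)} \<le> max 0 (1/2 - (1 - x i))"
    proof (rule meas_ge)
      fix t :: real assume t: "t \<in> {-1/2..1/2}" and v: "visible n x y prec i (bottom_side x y i t)"
      have "bottom_side x y i t \<notin> sq x y j" using vis_not_in[OF v j(1,2,3)] .
      then have "x i + t > x j + 1/2" using jx t by (auto simp: bottom_side_def sq_def abs_real_def split: if_splits)
      then show "1 - x i \<le> t" using xj by linarith
    qed
    then show ?thesis using xi by simp
  qed
  have mT: "measure lebesgue {t \<in> {-1/2..1/2}. visible n x y prec i (top_side x y i t)} \<le> x i - 1/2"
  proof -
    have "measure lebesgue {t \<in> {-1/2..1/2}. visible n x y prec i (top_side x y i t)} \<le> max 0 (1/2 - (1 - x i))"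
    proof (rule meas_ge)
      fix t :: real assume t: "t \<in> {-1/2..1/2}" and v: "visible n x y prec i (top_side x y i t)"
      have "top_side x y i t \<notin> sq x y j'" using vis_not_in[OF v j'(1,2,3)] .
      then have "x i + t > x j' + 1/2" using jx' t by (auto simp: top_side_def sq_def abs_real_def split: if_splits)
      then show "1 - x i \<le> t" using xj by linarith
    qed
    then show ?thesis using xi by simp
  qed
  have P: "vis_perimeter n x y prec i > 2 + 1/k" using g by (simp add: gap_def)
  show "1 + 1/k < 2*(x i - 1/2)"
    using arith1[OF P[unfolded vis_perimeter_def] mL mR mB mT] .
  fix s assume s: "s < n" "s \<noteq> i" "\<not> prec s i" "\<bar>y s - y i\<bar> \<le> 1"
  have xs: "1/2 \<le> x s" "x s \<le> w - 1/2" using xr s by auto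
  show "1 + 1/k < 2*(x i - 1/2) - (x s - 1/2)"
  proof (cases "y s \<ge> y i")
    case True
    have "measure lebesgue {t \<in> {-1/2..1/2}. visible n x y prec i (top_side x y i t)} \<le> max 0 (1/2 - (x s + 1/2 - x i))"
    proof (rule meas_ge)
      fix t :: real assume t: "t \<in> {-1/2..1/2}" and v: "visible n x y prec i (top_side x y i t)"
      have "top_side x y i t \<notin> sq x y j'" using vis_not_in[OF v j'(1,2,3)] .
      then have a1: "x i + t > x j' + 1/2" using jx' t by (auto simp: top_side_def sq_def abs_real_def split: if_splits)
      have "top_side x y i t \<notin> sq x y s" using vis_not_in[OF v s(1,2,3)] .
      then have "\<bar>x i + t - x s\<bar> > 1/2" using True s(4) by (auto simp: top_side_def sq_def abs_real_def split: if_splits)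
      then show "x s + 1/2 - x i \<le> t" using a1 xj xs w by linarith
    qed
    then have "1 + 1/k < (x i - 1/2) + (x i - x s)"
      using arith2[OF P[unfolded vis_perimeter_def] mL mR, of "x i - 1/2" "x i - x s"] mB xi w k
      by simp
    then show ?thesis by simp
  next
    case False
    have "measure lebesgue {t \<in> {-1/2..1/2}. visible n x y prec i (bottom_side x y i t)} \<le> max 0 (1/2 - (x s + 1/2 - x i))"
    proof (rule meas_ge)
      fix t :: real assume t: "t \<in> {-1/2..1/2}" and v: "visible n x y prec i (bottom_side x y i t)"
      have "bottom_side x y i t \<notin> sq x y j" using vis_not_in[OF v j(1,2,3)] .
      then have a1: "x i + t > x j + 1/2" using jx t by (auto simp: bottom_side_def sq_def abs_real_def split: if_splits)
      have "bottom_side x y i t \<notin> sq x y s" using vis_not_in[OF v s(1,2,3)] .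
      then have "\<bar>x i + t - x s\<bar> > 1/2" using False s(4) by (auto simp: bottom_side_def sq_def abs_real_def split: if_splits)
      then show "x s + 1/2 - x i \<le> t" using a1 xj xs w by linarith
    qed
    then have "1 + 1/k < (x i - 1/2) + (x i - x s)"
      using arith2[OF P[unfolded vis_perimeter_def] mL mR, of "x i - 1/2" "x i - x s"] mT xi w k
      by simp
    then show ?thesis by simp
  qed
qed

lemma right_facts:
  fixes k :: real
  assumes lay: "is_layout w n x prec" and w: "1 < w" "w \<le> 2" and k: "k > 0"
    and g: "gap n x y prec i > 1/k" and i: "i < n"
    and L: "\<forall>t\<in>{-1/2..1/2}. \<not> visible n x y prec i (right_side x y i t)"
  shows "1 + 1/k < 2*(w - 1/2 - x i)"
    and "\<And>s. s < n \<Longrightarrow> s \<noteq> i \<Longrightarrow> \<not> prec s i \<Longrightarrow> \<bar>y s - y i\<bar> \<le> 1 \<Longrightarrow>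
          1 + 1/k < 2*(w - 1/2 - x i) - (w - 1/2 - x s)"
proof -
  have xr: "\<forall>j<n. 1/2 \<le> x j \<and> x j \<le> w - 1/2" using lay by (simp add: is_layout_def)
  have xi: "1/2 \<le> x i" "x i \<le> w - 1/2" using xr i by auto
  obtain j where j: "j < n" "j \<noteq> i" "\<not> prec j i" "right_side x y i (-1/2) \<in> sq x y j"
    using L[rule_format, of "-1/2"] by (auto simp: visible_def)
  obtain j' where j': "j' < n" "j' \<noteq> i" "\<not> prec j' i" "right_side x y i (1/2) \<in> sq x y j'"
    using L[rule_format, of "1/2"] by (auto simp: visible_def)
  have jx: "\<bar>x i + 1/2 - x j\<bar> \<le> 1/2" "\<bar>y i - 1/2 - y j\<bar> \<le> 1/2"
    using j(4) by (auto simp: right_side_def sq_def)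
  have jx': "\<bar>x i + 1/2 - x j'\<bar> \<le> 1/2" "\<bar>y i + 1/2 - y j'\<bar> \<le> 1/2"
    using j'(4) by (auto simp: right_side_def sq_def)
  have xj: "x j \<le> w - 1/2" "x j' \<le> w - 1/2" using xr j j' by auto
  have mR: "measure lebesgue {t \<in> {-1/2..1/2}. visible n x y prec i (right_side x y i t)} = 0"
  proof -
    have "{t \<in> {-1/2..1/2}. visible n x y prec i (right_side x y i t)} = {}" using L by blast
    then show ?thesis by (metis measure_empty)
  qed
  have mL: "measure lebesgue {t \<in> {-1/2..1/2}. visible n x y prec i (left_side x y i t)} \<le> 1"
    using meas_ge[of "\<lambda>t. visible n x y prec i (left_side x y i t)" "-1/2"] by simp
  have mB: "measure lebesgue {t \<in> {-1/2..1/2}. visible n x y prec i (bottom_side x y i t)} \<le> w - 1/2 - x i"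
  proof -
    have "measure lebesgue {t \<in> {-1/2..1/2}. visible n x y prec i (bottom_side x y i t)} \<le> max 0 ((w - 1 - x i) + 1/2)"
    proof (rule meas_le)
      fix t :: real assume t: "t \<in> {-1/2..1/2}" and v: "visible n x y prec i (bottom_side x y i t)"
      have "bottom_side x y i t \<notin> sq x y j" using vis_not_in[OF v j(1,2,3)] .
      then have "x i + t < x j - 1/2" using jx t by (auto simp: bottom_side_def sq_def abs_real_def split: if_splits)
      then show "t \<le> w - 1 - x i" using xj by linarith
    qed
    then show ?thesis using xi by simp
  qed
  have mT: "measure lebesgue {t \<in> {-1/2..1/2}. visible n x y prec i (top_side x y i t)} \<le> w - 1/2 - x i"
  proof -
    have "measure lebesgue {t \<in> {-1/2..1/2}. visible n x y prec i (top_side x y i t)} \<le> max 0 ((w - 1 - x i) + 1/2)"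
    proof (rule meas_le)
      fix t :: real assume t: "t \<in> {-1/2..1/2}" and v: "visible n x y prec i (top_side x y i t)"
      have "top_side x y i t \<notin> sq x y j'" using vis_not_in[OF v j'(1,2,3)] .
      then have "x i + t < x j' - 1/2" using jx' t by (auto simp: top_side_def sq_def abs_real_def split: if_splits)
      then show "t \<le> w - 1 - x i" using xj by linarith
    qed
    then show ?thesis using xi by simp
  qed
  have P: "vis_perimeter n x y prec i > 2 + 1/k" using g by (simp add: gap_def)
  show "1 + 1/k < 2*(w - 1/2 - x i)"
    using arith1r[OF P[unfolded vis_perimeter_def] mL mR mB mT] .
  fix s assume s: "s < n" "s \<noteq> i" "\<not> prec s i" "\<bar>y s - y i\<bar> \<le> 1"
  have xs: "1/2 \<le> x s" "x s \<le> w - 1/2" using xr s by auto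
  show "1 + 1/k < 2*(w - 1/2 - x i) - (w - 1/2 - x s)"
  proof (cases "y s \<ge> y i")
    case True
    have "measure lebesgue {t \<in> {-1/2..1/2}. visible n x y prec i (top_side x y i t)} \<le> max 0 ((x s - 1/2 - x i) + 1/2)"
    proof (rule meas_le)
      fix t :: real assume t: "t \<in> {-1/2..1/2}" and v: "visible n x y prec i (top_side x y i t)"
      have "top_side x y i t \<notin> sq x y j'" using vis_not_in[OF v j'(1,2,3)] .
      then have a1: "x i + t < x j' - 1/2" using jx' t by (auto simp: top_side_def sq_def abs_real_def split: if_splits)
      have "top_side x y i t \<notin> sq x y s" using vis_not_in[OF v s(1,2,3)] .
      then have "\<bar>x i + t - x s\<bar> > 1/2" using True s(4) by (auto simp: top_side_def sq_def abs_real_def split: if_splits)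
      then show "t \<le> x s - 1/2 - x i" using a1 xj xs w by linarith
    qed
    then have "1 + 1/k < (w - 1/2 - x i) + (x s - x i)"
      using arith2r[OF P[unfolded vis_perimeter_def] mL mR, of "w - 1/2 - x i" "x s - x i"] mB xi w k xs
      by simp
    then show ?thesis by simp
  next
    case False
    have "measure lebesgue {t \<in> {-1/2..1/2}. visible n x y prec i (bottom_side x y i t)} \<le> max 0 ((x s - 1/2 - x i) + 1/2)"
    proof (rule meas_le)
      fix t :: real assume t: "t \<in> {-1/2..1/2}" and v: "visible n x y prec i (bottom_side x y i t)"
      have "bottom_side x y i t \<notin> sq x y j" using vis_not_in[OF v j(1,2,3)] .
      then have a1: "x i + t < x j - 1/2" using jx t by (auto simp: bottom_side_def sq_def abs_real_def split: if_splits)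
      have "bottom_side x y i t \<notin> sq x y s" using vis_not_in[OF v s(1,2,3)] .
      then have "\<bar>x i + t - x s\<bar> > 1/2" using False s(4) by (auto simp: bottom_side_def sq_def abs_real_def split: if_splits)
      then show "t \<le> x s - 1/2 - x i" using a1 xj xs w by linarith
    qed
    then have "1 + 1/k < (w - 1/2 - x i) + (x s - x i)"
      using arith2r[OF P[unfolded vis_perimeter_def] mL mR, of "w - 1/2 - x i" "x s - x i"] mT xi w k xs
      by simp
    then show ?thesis by simp
  qed
qed

lemma arith3: "(X::real) \<le> A + B \<Longrightarrow> A \<le> L \<Longrightarrow> B \<le> L \<Longrightarrow> X \<le> 2 * L" by linarith

lemma order_on:
  assumes lay: "is_layout w n x prec" and S: "S \<subseteq> {..<n}"
  shows "\<forall>i\<in>S. \<not> prec i i"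
    and "\<forall>i\<in>S. \<forall>j\<in>S. \<forall>l\<in>S. prec i j \<and> prec j l \<longrightarrow> prec i l"
    and "\<forall>i\<in>S. \<forall>j\<in>S. i \<noteq> j \<longrightarrow> prec i j \<or> prec j i"
proof -
  have irr0: "\<forall>i<n. \<not> prec i i"
    and tr0: "\<forall>i<n. \<forall>j<n. \<forall>l<n. prec i j \<and> prec j l \<longrightarrow> prec i l"
    and tot0: "\<forall>i<n. \<forall>j<n. i \<noteq> j \<longrightarrow> prec i j \<or> prec j i"
    using lay unfolding is_layout_def by blast+
  have m: "\<And>i. i \<in> S \<Longrightarrow> i < n" using S by auto
  show "\<forall>i\<in>S. \<not> prec i i" using irr0 m by blast
  show "\<forall>i\<in>S. \<forall>j\<in>S. \<forall>l\<in>S. prec i j \<and> prec j l \<longrightarrow> prec i l"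
  proof (intro ballI impI)
    fix i j l assume "i \<in> S" "j \<in> S" "l \<in> S" "prec i j \<and> prec j l"
    then show "prec i l" using tr0 m[of i] m[of j] m[of l] by blast
  qed
  show "\<forall>i\<in>S. \<forall>j\<in>S. i \<noteq> j \<longrightarrow> prec i j \<or> prec j i"
  proof (intro ballI impI)
    fix i j assume "i \<in> S" "j \<in> S" "i \<noteq> j"
    then show "prec i j \<or> prec j i" using tot0 m[of i] m[of j] by blast
  qed
qed

theorem lemma14:
  fixes w h k a :: real and n :: nat and y x :: "nat \<Rightarrow> real" and prec :: "nat \<Rightarrow> nat \<Rightarrow> bool"
  assumes "1 < w" "w \<le> 2" "h > 1" "k \<ge> 2"
    and "\<forall>i<n. 1/2 \<le> y i \<and> y i \<le> h - 1/2"
    and "\<forall>i. Suc i < n \<longrightarrow> y (Suc i) - y i = 1 / k"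
    and "is_layout w n x prec"
    and "reasonable (1 / k) n x y prec"
  shows "real (card {i. i < n \<and> standard_bad_square n x y prec i \<and> y i \<in> {a..a+1}})
           \<le> 2 * (log 2 k + 1)"
proof -
  have k0: "k > 0" and k1: "k \<ge> 1" using assms(4) by auto
  have lay: "is_layout w n x prec" using assms(7) .
  have w: "1 < w" "w \<le> 2" using assms(1,2) by auto
  have xr: "\<forall>j<n. 1/2 \<le> x j \<and> x j \<le> w - 1/2" using lay by (simp add: is_layout_def)
  have gp: "\<And>i. i < n \<Longrightarrow> gap n x y prec i > 1/k" using assms(8) by (simp add: reasonable_def)
  have irr0: "\<forall>i<n. \<not> prec i i"
    and tr0: "\<forall>i<n. \<forall>j<n. \<forall>l<n. prec i j \<and> prec j l \<longrightarrow> prec i l"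
    and tot0: "\<forall>i<n. \<forall>j<n. i \<noteq> j \<longrightarrow> prec i j \<or> prec j i"
    using lay unfolding is_layout_def by blast+
  define W where "W = {i. i < n \<and> y i \<in> {a..a+1}}"
  define SL where "SL = {i\<in>W. \<forall>t\<in>{-1/2..1/2}. \<not> visible n x y prec i (left_side x y i t)}"
  define SR where "SR = {i\<in>W. \<forall>t\<in>{-1/2..1/2}. \<not> visible n x y prec i (right_side x y i t)}"
  have SLn: "SL \<subseteq> {..<n}" and SRn: "SR \<subseteq> {..<n}" by (auto simp: SL_def SR_def W_def)
  have finL: "finite SL" and finR: "finite SR" using SLn SRn finite_subset by blast+
  have ydist: "\<And>i s. i \<in> W \<Longrightarrow> s \<in> W \<Longrightarrow> \<bar>y s - y i\<bar> \<le> 1" by (auto simp: W_def)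
  have sub: "{i. i < n \<and> standard_bad_square n x y prec i \<and> y i \<in> {a..a+1}} \<subseteq> SL \<union> SR"
    by (auto simp: standard_bad_square_def SL_def SR_def W_def)
  have c1: "card {i. i < n \<and> standard_bad_square n x y prec i \<and> y i \<in> {a..a+1}} \<le> card SL + card SR"
    using card_mono[OF _ sub] card_Un_le[of SL SR] finL finR by (meson finite_UnI order_trans)
  note ordL = order_on[OF lay SLn]
  note ordR = order_on[OF lay SRn]
  have front: "s \<noteq> i \<and> \<not> prec s i" if "i < n" "s < n" "prec i s" for i s
  proof
    show "s \<noteq> i" using that irr0 by auto
    show "\<not> prec s i"
    proof
      assume "prec s i"
      then have "prec i i" using tr0 that by blast
      then show False using irr0 that by blast
    qed
  qed
  have cL: "real (card SL) \<le> log 2 k + 1"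
  proof (rule chain[OF finL k1 ordL, of "\<lambda>i. x i - 1/2"])
    show "\<forall>i\<in>SL. x i - 1/2 \<le> 1"
    proof
      fix i assume "i \<in> SL" then have "i < n" using SLn by auto
      then show "x i - 1/2 \<le> 1" using xr w by auto
    qed
    show "\<forall>i\<in>SL. 1 + 1/k < 2 * (x i - 1/2)"
    proof
      fix i assume i: "i \<in> SL"
      then have "i < n" using SLn by auto
      then show "1 + 1/k < 2 * (x i - 1/2)"
        using left_facts(1)[OF lay w k0 gp] i by (auto simp: SL_def)
    qed
    show "\<forall>i\<in>SL. \<forall>s\<in>SL. prec i s \<longrightarrow> 1 + 1/k < 2 * (x i - 1/2) - (x s - 1/2)"
    proof (intro ballI impI)
      fix i s assume i: "i \<in> SL" and s: "s \<in> SL" and p: "prec i s"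
      have "i < n" "s < n" using i s SLn by auto
      moreover have "\<bar>y s - y i\<bar> \<le> 1" using ydist i s by (auto simp: SL_def)
      moreover have "s \<noteq> i" "\<not> prec s i" using front calculation p by auto
      ultimately show "1 + 1/k < 2 * (x i - 1/2) - (x s - 1/2)"
        using left_facts(2)[OF lay w k0 gp] i by (auto simp: SL_def)
    qed
  qed
  have cR: "real (card SR) \<le> log 2 k + 1"
  proof (rule chain[OF finR k1 ordR, of "\<lambda>i. w - 1/2 - x i"])
    show "\<forall>i\<in>SR. w - 1/2 - x i \<le> 1"
    proof
      fix i assume "i \<in> SR" then have "i < n" using SRn by auto
      then show "w - 1/2 - x i \<le> 1" using xr w by auto
    qed
    show "\<forall>i\<in>SR. 1 + 1/k < 2 * (w - 1/2 - x i)"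
    proof
      fix i assume i: "i \<in> SR"
      then have "i < n" using SRn by auto
      then show "1 + 1/k < 2 * (w - 1/2 - x i)"
        using right_facts(1)[OF lay w k0 gp] i by (auto simp: SR_def)
    qed
    show "\<forall>i\<in>SR. \<forall>s\<in>SR. prec i s \<longrightarrow> 1 + 1/k < 2 * (w - 1/2 - x i) - (w - 1/2 - x s)"
    proof (intro ballI impI)
      fix i s assume i: "i \<in> SR" and s: "s \<in> SR" and p: "prec i s"
      have "i < n" "s < n" using i s SRn by auto
      moreover have "\<bar>y s - y i\<bar> \<le> 1" using ydist i s by (auto simp: SR_def)
      moreover have "s \<noteq> i" "\<not> prec s i" using front calculation p by auto
      ultimately show "1 + 1/k < 2 * (w - 1/2 - x i) - (w - 1/2 - x s)"
        using right_facts(2)[OF lay w k0 gp] i by (auto simp: SR_def)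
    qed
  qed
  have "real (card {i. i < n \<and> standard_bad_square n x y prec i \<and> y i \<in> {a..a+1}}) \<le> real (card SL) + real (card SR)"
    using c1 by linarith
  from arith3[OF this cL cR] show ?thesis .
qed

end
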